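(* Let $G$ be a linearly ordered abelian group, $F$ a field of characteristic $0$, $n\leq 3$, and let $\Gamma$ be an almost non-degenerate elementary $G$-grading on $M_n(F)$ whose neutral component is commutative. Then $\Gamma$ is equivalent to the canonical $\mathbb{Z}$-grading on $M_n(F)$.
   Context: A linearly ordered group is a group with a translation-invariant total order. The elementary grading on $M_n(F)$ induced by $(g_1,\dots,g_n)$ is $R_g=\mathrm{span}\{e_{pq}: g_q-g_p=g\}$; the canonical $\mathbb{Z}$-grading is the one induced by $(0,1,\dots,n-1)$. Two gradings are equivalent if there are an algebra isomorphism $\varphi$ and a bijection $\alpha$ between their supports with $\varphi(A_g)=B_{\alpha(g)}$ for all $g$ in the support. A graded monomial identity is trivial if it lies in the $T_G$-ideal generated by the variables whose degree is outside the support of the grading, and non-trivial otherwise; a grading is almost non-degenerate if it satisfies no non-trivial multilinear graded monomial identity. *)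

theory Defs
  imports "Jordan_Normal_Form.Matrix"
begin

text \<open>A G-grading is given by its family of homogeneous components g -> R_g.
  Elementary grading induced by (g_1,...,g_n) (indices 0..n-1):
  R_g = span of e_pq with g_q - g_p = g, i.e. matrices supported on those positions.\<close>

definition elem_grading :: "nat \<Rightarrow> (nat \<Rightarrow> 'g::ab_group_add) \<Rightarrow> 'g \<Rightarrow> 'a::zero mat set" where
  "elem_grading n gs g =
     {A \<in> carrier_mat n n. \<forall>p<n. \<forall>q<n. A $$ (p,q) \<noteq> 0 \<longrightarrow> gs q - gs p = g}"

definition grading_supp :: "nat \<Rightarrow> ('g \<Rightarrow> 'a::zero mat set) \<Rightarrow> 'g set" where
  "grading_supp n \<Gamma> = {g. \<exists>A\<in>\<Gamma> g. A \<noteq> 0\<^sub>m n n}"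

definition mat_alg_iso :: "nat \<Rightarrow> ('a::comm_ring_1 mat \<Rightarrow> 'a mat) \<Rightarrow> bool" where
  "mat_alg_iso n \<phi> \<longleftrightarrow> bij_betw \<phi> (carrier_mat n n) (carrier_mat n n) \<and>
     (\<forall>A\<in>carrier_mat n n. \<forall>B\<in>carrier_mat n n.
        \<phi> (A + B) = \<phi> A + \<phi> B \<and> \<phi> (A * B) = \<phi> A * \<phi> B) \<and>
     (\<forall>c. \<forall>A\<in>carrier_mat n n. \<phi> (c \<cdot>\<^sub>m A) = c \<cdot>\<^sub>m \<phi> A)"

definition graded_equivalent ::
  "nat \<Rightarrow> ('g \<Rightarrow> 'a::comm_ring_1 mat set) \<Rightarrow> ('h \<Rightarrow> 'a mat set) \<Rightarrow> bool" where
  "graded_equivalent n \<Gamma> \<Delta> \<longleftrightarrow> (\<exists>\<phi> \<alpha>. mat_alg_iso n \<phi> \<and>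
     bij_betw \<alpha> (grading_supp n \<Gamma>) (grading_supp n \<Delta>) \<and>
     (\<forall>g\<in>grading_supp n \<Gamma>. \<phi> ` \<Gamma> g = \<Delta> (\<alpha> g)))"

text \<open>Graded variables x_i^{(g)} are pairs (i,g) :: nat \<times> 'g (countably many of each degree).
  Noncommutative polynomials: functions from words to coefficients, finitely supported.\<close>

type_synonym ('g,'a) fpoly = "(nat \<times> 'g) list \<Rightarrow> 'a"

definition psupp :: "('g,'a::zero) fpoly \<Rightarrow> (nat \<times> 'g) list set" where
  "psupp p = {w. p w \<noteq> 0}"

definition fin_poly :: "('g,'a::zero) fpoly \<Rightarrow> bool" where
  "fin_poly p \<longleftrightarrow> finite (psupp p)"

definition pmono :: "(nat \<times> 'g) list \<Rightarrow> ('g,'a::{zero,one}) fpoly" where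
  "pmono w = (\<lambda>u. if u = w then 1 else 0)"

definition pone :: "('g,'a::{zero,one}) fpoly" where
  "pone = pmono []"

definition pmul :: "('g,'a::comm_ring_1) fpoly \<Rightarrow> ('g,'a) fpoly \<Rightarrow> ('g,'a) fpoly" where
  "pmul p q = (\<lambda>w. \<Sum>i\<le>length w. p (take i w) * q (drop i w))"

definition wdeg :: "(nat \<times> 'g::comm_monoid_add) list \<Rightarrow> 'g" where
  "wdeg w = sum_list (map snd w)"

text \<open>Image of p under the endomorphism sending each variable v to \<sigma> v.\<close>
definition psubst :: "((nat \<times> 'g) \<Rightarrow> ('g,'a::comm_ring_1) fpoly) \<Rightarrow> ('g,'a) fpoly \<Rightarrow> ('g,'a) fpoly" where
  "psubst \<sigma> p = (\<lambda>u. \<Sum>w\<in>psupp p. p w * foldr pmul (map \<sigma> w) pone u)"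

definition graded_subst :: "((nat \<times> 'g::comm_monoid_add) \<Rightarrow> ('g,'a::zero) fpoly) \<Rightarrow> bool" where
  "graded_subst \<sigma> \<longleftrightarrow> (\<forall>v. fin_poly (\<sigma> v) \<and> (\<forall>u. \<sigma> v u \<noteq> 0 \<longrightarrow> wdeg u = snd v))"

inductive_set TG_ideal :: "('g::comm_monoid_add,'a::comm_ring_1) fpoly set \<Rightarrow> ('g,'a) fpoly set"
  for S where
  gen: "s \<in> S \<Longrightarrow> fin_poly s \<Longrightarrow> graded_subst \<sigma> \<Longrightarrow> psubst \<sigma> s \<in> TG_ideal S"
| zero: "(\<lambda>_. 0) \<in> TG_ideal S"
| add: "p \<in> TG_ideal S \<Longrightarrow> q \<in> TG_ideal S \<Longrightarrow> (\<lambda>u. p u + q u) \<in> TG_ideal S"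
| lmul: "p \<in> TG_ideal S \<Longrightarrow> fin_poly r \<Longrightarrow> pmul r p \<in> TG_ideal S"
| rmul: "p \<in> TG_ideal S \<Longrightarrow> fin_poly r \<Longrightarrow> pmul p r \<in> TG_ideal S"

definition mono_identity :: "nat \<Rightarrow> ('g \<Rightarrow> 'a::comm_ring_1 mat set) \<Rightarrow> (nat \<times> 'g) list \<Rightarrow> bool" where
  "mono_identity n \<Gamma> w \<longleftrightarrow>
     (\<forall>a. (\<forall>v\<in>set w. a v \<in> \<Gamma> (snd v)) \<longrightarrow> foldr (*) (map a w) (1\<^sub>m n) = 0\<^sub>m n n)"

definition trivial_monomial :: "nat \<Rightarrow> ('g::comm_monoid_add \<Rightarrow> 'a::comm_ring_1 mat set) \<Rightarrow> (nat \<times> 'g) list \<Rightarrow> bool" where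
  "trivial_monomial n \<Gamma> w \<longleftrightarrow>
     (pmono w :: ('g,'a) fpoly) \<in> TG_ideal {pmono [v] | v. snd v \<notin> grading_supp n \<Gamma>}"

text \<open>Almost non-degenerate: every multilinear (distinct variables) graded monomial identity is trivial.\<close>
definition almost_nondegenerate :: "nat \<Rightarrow> ('g::comm_monoid_add \<Rightarrow> 'a::comm_ring_1 mat set) \<Rightarrow> bool" where
  "almost_nondegenerate n \<Gamma> \<longleftrightarrow>
     (\<forall>w. distinct w \<longrightarrow> mono_identity n \<Gamma> w \<longrightarrow> trivial_monomial n \<Gamma> w)"

end

theory Submission
  imports Defs
begin

definition unitm :: "nat \<Rightarrow> nat \<Rightarrow> nat \<Rightarrow> 'a::zero_neq_one mat" where
  "unitm n i j = mat n n (\<lambda>(p,q). if p = i \<and> q = j then 1 else 0)"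

lemma mult_entry: "A \<in> carrier_mat n n \<Longrightarrow> B \<in> carrier_mat n n \<Longrightarrow> i < n \<Longrightarrow> j < n \<Longrightarrow>
   (A * B) $$ (i,j) = (\<Sum>k<n. A $$ (i,k) * B $$ (k,j))"
  by (auto simp: index_mult_mat scalar_prod_def row_def col_def lessThan_atLeast0)

lemma supp_elem:
  "grading_supp n (elem_grading n gs :: 'g::ab_group_add \<Rightarrow> 'a::zero_neq_one mat set) = {gs q - gs p | p q. p<n \<and> q<n}"
proof safe
  fix g assume "g \<in> grading_supp n (elem_grading n gs :: 'g \<Rightarrow> 'a mat set)"
  then obtain A :: "'a mat" where A: "A \<in> elem_grading n gs g" "A \<noteq> 0\<^sub>m n n"
    unfolding grading_supp_def by auto
  have C: "A \<in> carrier_mat n n" using A unfolding elem_grading_def by auto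
  have "\<exists>p<n. \<exists>q<n. A $$ (p,q) \<noteq> 0"
  proof (rule ccontr)
    assume "\<not> ?thesis"
    then have "A = 0\<^sub>m n n" using C by (intro eq_matI) auto
    with A show False by simp
  qed
  then obtain p q where "p<n" "q<n" "A $$ (p,q) \<noteq> 0" by auto
  then show "\<exists>p q. g = gs q - gs p \<and> p < n \<and> q < n" using A unfolding elem_grading_def by force
next
  fix p q assume pq: "p < n" "q < n"
  have "unitm n p q \<in> (elem_grading n gs (gs q - gs p) :: 'a mat set)"
    unfolding elem_grading_def unitm_def by (auto split: if_splits)
  moreover have "unitm n p q \<noteq> (0\<^sub>m n n :: 'a mat)"
  proof
    assume "unitm n p q = (0\<^sub>m n n :: 'a mat)"
    then have "unitm n p q $$ (p,q) = (0\<^sub>m n n :: 'a mat) $$ (p,q)" by simp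
    with pq show False unfolding unitm_def by simp
  qed
  ultimately show "gs q - gs p \<in> grading_supp n (elem_grading n gs :: 'g \<Rightarrow> 'a mat set)"
    unfolding grading_supp_def by blast
qed

lemma distinct_from_comm:
  assumes "\<forall>A\<in>(elem_grading n gs 0 :: 'a::comm_ring_1 mat set). \<forall>B\<in>elem_grading n gs 0. A * B = B * A"
    and "i < n" "j < n" "i \<noteq> j"
  shows "gs i \<noteq> (gs j :: 'g::ab_group_add)"
proof
  assume e: "gs i = gs j"
  have E1: "(unitm n i j :: 'a mat) \<in> elem_grading n gs 0"
    using e unfolding elem_grading_def unitm_def by (auto split: if_splits)
  have E2: "(unitm n j i :: 'a mat) \<in> elem_grading n gs 0"
    using e unfolding elem_grading_def unitm_def by (auto split: if_splits)
  have eq: "(unitm n i j * unitm n j i :: 'a mat) = unitm n j i * unitm n i j"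
    using assms(1) E1 E2 by blast
  have c: "\<And>a b. (unitm n a b :: 'a mat) \<in> carrier_mat n n" unfolding unitm_def by auto
  have sq: "\<And>k. (if k = j then 1 else 0) * (if k = j then 1 else 0) = (if k = j then 1 else (0::'a))" by simp
  have "(unitm n i j * unitm n j i :: 'a mat) $$ (i,i) = (\<Sum>k<n. (if k = j then 1 else 0))"
    using assms by (subst mult_entry[OF c c]) (auto simp: unitm_def sq)
  also have "\<dots> = 1" using assms by simp
  finally have 1: "(unitm n i j * unitm n j i :: 'a mat) $$ (i,i) = 1" .
  have "(unitm n j i * unitm n i j :: 'a mat) $$ (i,i) = (\<Sum>k<n. 0)"
    using assms by (subst mult_entry[OF c c]) (auto simp: unitm_def intro!: sum.cong)
  then have "(unitm n j i * unitm n i j :: 'a mat) $$ (i,i) = 0" by simp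
  with 1 eq show False by simp
qed

definition reidx :: "nat \<Rightarrow> (nat \<Rightarrow> nat) \<Rightarrow> 'a mat \<Rightarrow> 'a mat" where
  "reidx n \<pi> A = mat n n (\<lambda>(i,j). A $$ (\<pi> i, \<pi> j))"

lemma reidx_carrier[simp]: "reidx n \<pi> A \<in> carrier_mat n n" unfolding reidx_def by auto

lemma reidx_dim[simp]: "dim_row (reidx n \<pi> A) = n" "dim_col (reidx n \<pi> A) = n" unfolding reidx_def by auto

lemma reidx_idx[simp]: "i < n \<Longrightarrow> j < n \<Longrightarrow> reidx n \<pi> A $$ (i,j) = A $$ (\<pi> i, \<pi> j)"
  unfolding reidx_def by auto

lemma reidx_inv:
  assumes "bij_betw \<pi> {..<n} {..<n}" "A \<in> carrier_mat n n"
  shows "reidx n (inv_into {..<n} \<pi>) (reidx n \<pi> A) = A"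
proof (rule eq_matI)
  fix i j assume "i < dim_row A" "j < dim_col A"
  then have ij: "i < n" "j < n" using assms by auto
  have "inv_into {..<n} \<pi> i < n" "inv_into {..<n} \<pi> j < n"
    using ij assms bij_betw_inv_into bij_betwE by fastforce+
  then show "reidx n (inv_into {..<n} \<pi>) (reidx n \<pi> A) $$ (i, j) = A $$ (i, j)"
    using ij assms by (simp add: bij_betw_inv_into_right)
qed (use assms in auto)

lemma reidx_mat_alg_iso:
  assumes bij: "bij_betw \<pi> {..<n} {..<n}"
  shows "mat_alg_iso n (reidx n \<pi> :: 'a::comm_ring_1 mat \<Rightarrow> 'a mat)"
proof -
  have bi: "bij_betw (inv_into {..<n} \<pi>) {..<n} {..<n}" using bij bij_betw_inv_into by blast
  have pl: "\<And>i. i < n \<Longrightarrow> \<pi> i < n" using bij bij_betwE by blast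
  have "bij_betw (reidx n \<pi> :: 'a mat \<Rightarrow> 'a mat) (carrier_mat n n) (carrier_mat n n)"
  proof (rule bij_betw_byWitness[where f' = "reidx n (inv_into {..<n} \<pi>)"])
    show "\<forall>a\<in>carrier_mat n n. reidx n (inv_into {..<n} \<pi>) (reidx n \<pi> a) = (a :: 'a mat)"
      using reidx_inv[OF bij] by blast
    show "\<forall>a'\<in>carrier_mat n n. reidx n \<pi> (reidx n (inv_into {..<n} \<pi>) a') = (a' :: 'a mat)"
    proof
      fix a' :: "'a mat" assume a': "a' \<in> carrier_mat n n"
      show "reidx n \<pi> (reidx n (inv_into {..<n} \<pi>) a') = a'"
      proof (rule eq_matI)
        fix i j assume "i < dim_row a'" "j < dim_col a'"
        then have ij: "i < n" "j < n" using a' by auto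
        then show "reidx n \<pi> (reidx n (inv_into {..<n} \<pi>) a') $$ (i, j) = a' $$ (i, j)"
          using pl bij by (simp add: bij_betw_inv_into_left)
      qed (use a' in auto)
    qed
  qed auto
  moreover have "\<phi> (A * B) = \<phi> A * \<phi> B" if "A \<in> carrier_mat n n" "B \<in> carrier_mat n n" "\<phi> = reidx n \<pi>" for A B :: "'a mat" and \<phi>
  proof (rule eq_matI)
    fix i j assume "i < dim_row (\<phi> A * \<phi> B)" "j < dim_col (\<phi> A * \<phi> B)"
    then have ij: "i < n" "j < n" using that by auto
    have "(\<phi> A * \<phi> B) $$ (i,j) = (\<Sum>k<n. A $$ (\<pi> i, \<pi> k) * B $$ (\<pi> k, \<pi> j))"
      unfolding that(3) by (subst mult_entry[OF reidx_carrier reidx_carrier]) (use ij pl in auto)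
    also have "\<dots> = (\<Sum>k\<in>\<pi> ` {..<n}. A $$ (\<pi> i, k) * B $$ (k, \<pi> j))"
      using bij by (subst sum.reindex) (auto simp: bij_betw_def)
    also have "\<dots> = (A * B) $$ (\<pi> i, \<pi> j)"
      by (subst mult_entry[OF that(1,2)]) (use bij ij pl in \<open>auto simp: bij_betw_def\<close>)
    finally show "\<phi> (A * B) $$ (i, j) = (\<phi> A * \<phi> B) $$ (i, j)" using ij that by simp
  qed (use that in auto)
  moreover have "reidx n \<pi> (A + B) = reidx n \<pi> A + reidx n \<pi> B" if "A \<in> carrier_mat n n" "B \<in> carrier_mat n n" for A B :: "'a mat"
    by (rule eq_matI) (use that pl in auto)
  moreover have "reidx n \<pi> (c \<cdot>\<^sub>m A) = c \<cdot>\<^sub>m reidx n \<pi> A" if "A \<in> carrier_mat n n" for A :: "'a mat" and c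
    by (rule eq_matI) (use that pl in auto)
  ultimately show ?thesis unfolding mat_alg_iso_def by blast
qed

lemma reidx_image:
  assumes bij: "bij_betw \<pi> {..<n} {..<n}"
  shows "reidx n \<pi> ` (elem_grading n gs g :: 'a::zero mat set) = elem_grading n (\<lambda>i. gs (\<pi> i)) g"
proof safe
  have pl: "\<And>i. i < n \<Longrightarrow> \<pi> i < n" using bij bij_betwE by blast
  fix A :: "'a mat" assume "A \<in> elem_grading n gs g"
  then show "reidx n \<pi> A \<in> elem_grading n (\<lambda>i. gs (\<pi> i)) g"
    unfolding elem_grading_def using pl by auto
next
  fix B :: "'a mat" assume B: "B \<in> elem_grading n (\<lambda>i. gs (\<pi> i)) g"
  have pl: "\<And>i. i < n \<Longrightarrow> \<pi> i < n" using bij bij_betwE by blast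
  let ?\<sigma> = "inv_into {..<n} \<pi>"
  have si: "\<And>i. i < n \<Longrightarrow> ?\<sigma> i < n" using bij bij_betw_inv_into bij_betwE by blast
  have ps: "\<And>i. i < n \<Longrightarrow> \<pi> (?\<sigma> i) = i" using bij by (simp add: bij_betw_inv_into_right)
  have sp: "\<And>i. i < n \<Longrightarrow> ?\<sigma> (\<pi> i) = i" using bij by (meson bij_betw_inv_into_left lessThan_iff)
  have C: "B \<in> carrier_mat n n" using B unfolding elem_grading_def by auto
  have "reidx n \<pi> (reidx n ?\<sigma> B) = B"
    by (rule eq_matI) (use C si pl sp in auto)
  moreover have "reidx n ?\<sigma> B \<in> elem_grading n gs g"
    unfolding elem_grading_def
  proof (intro CollectI conjI allI impI)
    fix p q assume pq: "p < n" "q < n" "reidx n ?\<sigma> B $$ (p, q) \<noteq> 0"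
    then have "B $$ (?\<sigma> p, ?\<sigma> q) \<noteq> 0" by simp
    then have "gs (\<pi> (?\<sigma> q)) - gs (\<pi> (?\<sigma> p)) = g" using B si pq unfolding elem_grading_def by blast
    then show "gs q - gs p = g" using ps pq by simp
  qed auto
  ultimately show "B \<in> reidx n \<pi> ` elem_grading n gs g" by (metis image_eqI)
qed

lemma equiv_crit:
  fixes gs :: "nat \<Rightarrow> 'g::ab_group_add" and h :: "nat \<Rightarrow> 'h::ab_group_add"
  assumes bij: "bij_betw \<pi> {..<n} {..<n}"
    and iff: "\<And>p q p' q'. p<n \<Longrightarrow> q<n \<Longrightarrow> p'<n \<Longrightarrow> q'<n \<Longrightarrow>
        (gs (\<pi> q) - gs (\<pi> p) = gs (\<pi> q') - gs (\<pi> p')) = (h q - h p = h q' - h p')"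
  shows "graded_equivalent n (elem_grading n gs :: 'g \<Rightarrow> 'a::{comm_ring_1} mat set) (elem_grading n h)"
proof -
  have pl: "\<And>i. i < n \<Longrightarrow> \<pi> i < n" using bij bij_betwE by blast
  have supg: "grading_supp n (elem_grading n gs :: 'g \<Rightarrow> 'a mat set) = {gs (\<pi> q) - gs (\<pi> p) | p q. p<n \<and> q<n}"
  proof -
    have "{gs q - gs p | p q. p<n \<and> q<n} = {gs (\<pi> q) - gs (\<pi> p) | p q. p<n \<and> q<n}"
    proof safe
      fix p q assume "p < n" "q < n"
      then have "p \<in> \<pi> ` {..<n}" "q \<in> \<pi> ` {..<n}" using bij by (auto simp: bij_betw_def)
      then obtain p' q' where "p' < n" "q' < n" "p = \<pi> p'" "q = \<pi> q'" by auto
      then show "\<exists>p' q'. gs q - gs p = gs (\<pi> q') - gs (\<pi> p') \<and> p' < n \<and> q' < n" by blast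
    qed (use pl in blast)
    then show ?thesis by (simp add: supp_elem)
  qed
  have suph: "grading_supp n (elem_grading n h :: 'h \<Rightarrow> 'a mat set) = {h q - h p | p q. p<n \<and> q<n}"
    by (simp add: supp_elem)
  define \<alpha> where "\<alpha> g = (SOME k. \<exists>p<n. \<exists>q<n. gs (\<pi> q) - gs (\<pi> p) = g \<and> k = h q - h p)" for g
  have \<alpha>: "\<alpha> (gs (\<pi> q) - gs (\<pi> p)) = h q - h p" if "p < n" "q < n" for p q
  proof -
    have "\<exists>k. \<exists>p'<n. \<exists>q'<n. gs (\<pi> q') - gs (\<pi> p') = gs (\<pi> q) - gs (\<pi> p) \<and> k = h q' - h p'"
      using that by blast
    from someI_ex[OF this] obtain p' q' where "p' < n" "q' < n"
      "gs (\<pi> q') - gs (\<pi> p') = gs (\<pi> q) - gs (\<pi> p)" "\<alpha> (gs (\<pi> q) - gs (\<pi> p)) = h q' - h p'"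
      unfolding \<alpha>_def by blast
    then show ?thesis using iff[of p' q' p q] that by simp
  qed
  show ?thesis unfolding graded_equivalent_def
  proof (intro exI conjI)
    show "mat_alg_iso n (reidx n \<pi> :: 'a mat \<Rightarrow> 'a mat)" by (rule reidx_mat_alg_iso[OF bij])
    show "bij_betw \<alpha> (grading_supp n (elem_grading n gs :: 'g \<Rightarrow> 'a mat set)) (grading_supp n (elem_grading n h :: 'h \<Rightarrow> 'a mat set))"
      unfolding supg suph bij_betw_def
    proof
      show "inj_on \<alpha> {gs (\<pi> q) - gs (\<pi> p) |p q. p < n \<and> q < n}"
        by (auto simp: inj_on_def \<alpha> iff)
      show "\<alpha> ` {gs (\<pi> q) - gs (\<pi> p) |p q. p < n \<and> q < n} = {h q - h p |p q. p < n \<and> q < n}"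
        using \<alpha> by force
    qed
    show "\<forall>g\<in>grading_supp n (elem_grading n gs :: 'g \<Rightarrow> 'a mat set). reidx n \<pi> ` (elem_grading n gs g :: 'a mat set) = elem_grading n h (\<alpha> g)"
    proof
      fix g assume "g \<in> grading_supp n (elem_grading n gs :: 'g \<Rightarrow> 'a mat set)"
      then obtain p q where pq: "p < n" "q < n" "g = gs (\<pi> q) - gs (\<pi> p)" unfolding supg by auto
      have "elem_grading n (\<lambda>i. gs (\<pi> i)) g = (elem_grading n h (\<alpha> g) :: 'a mat set)"
        unfolding elem_grading_def pq(3) \<alpha>[OF pq(1,2)] using iff pq by auto
      then show "reidx n \<pi> ` (elem_grading n gs g :: 'a mat set) = elem_grading n h (\<alpha> g)"
        by (simp add: reidx_image[OF bij])
    qed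
  qed
qed

definition badw :: "'g set \<Rightarrow> (nat \<times> 'g::comm_monoid_add) list \<Rightarrow> bool" where
  "badw S w \<longleftrightarrow> (\<exists>u v z. w = u @ v @ z \<and> wdeg v \<notin> S)"

lemma pmul_nz: "pmul p q u \<noteq> 0 \<Longrightarrow> \<exists>i\<le>length u. p (take i u) \<noteq> 0 \<and> q (drop i u) \<noteq> 0"
  unfolding pmul_def by (metis (mono_tags, lifting) atMost_iff mult_not_zero sum.neutral)

lemma TG_bad:
  assumes "p \<in> TG_ideal {pmono [v] | v. snd v \<notin> S}"
  shows "p u \<noteq> 0 \<Longrightarrow> badw S u"
  using assms
proof (induction arbitrary: u rule: TG_ideal.induct)
  case (gen s \<sigma>)
  then obtain v where v: "s = pmono [v]" "snd v \<notin> S" by auto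
  from gen.prems obtain w where w: "w \<in> psupp s" "s w * foldr pmul (map \<sigma> w) pone u \<noteq> 0"
    unfolding psubst_def by (meson sum.not_neutral_contains_not_neutral)
  have "w = [v]" using w(1) v unfolding psupp_def pmono_def by (auto split: if_splits)
  with w have "pmul (\<sigma> v) pone u \<noteq> 0" by auto
  then obtain i where "i \<le> length u" "\<sigma> v (take i u) \<noteq> 0" "pone (drop i u) \<noteq> (0::'b)"
    using pmul_nz by blast
  then have "drop i u = []" "\<sigma> v u \<noteq> 0" unfolding pone_def pmono_def by (auto split: if_splits)
  then have "wdeg u = snd v" using gen.hyps(3) unfolding graded_subst_def by blast
  then show ?case unfolding badw_def using v(2) by (metis append.left_neutral append.right_neutral)
next
  case zero then show ?case by simp
next
  case (add p q) then show ?case by (metis add.left_neutral add_0_right)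
next
  case (lmul p r)
  then obtain i where "p (drop i u) \<noteq> 0" using pmul_nz by blast
  then have "badw S (drop i u)" using lmul.IH by blast
  then obtain a b c where "drop i u = a @ b @ c" "wdeg b \<notin> S" unfolding badw_def by blast
  then have "u = (take i u @ a) @ b @ c" by (metis append.assoc append_take_drop_id)
  then show ?case unfolding badw_def using \<open>wdeg b \<notin> S\<close> by blast
next
  case (rmul p r)
  then obtain i where "p (take i u) \<noteq> 0" using pmul_nz by blast
  then have "badw S (take i u)" using rmul.IH by blast
  then obtain a b c where "take i u = a @ b @ c" "wdeg b \<notin> S" unfolding badw_def by blast
  then have "u = a @ b @ (c @ drop i u)" by (metis append.assoc append_take_drop_id)
  then show ?case unfolding badw_def using \<open>wdeg b \<notin> S\<close> by blast
qed

lemma split2: "u @ v @ z = [x, y] \<Longrightarrow> v = [] \<or> v = [x] \<or> v = [y] \<or> v = [x, y]"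
  by (cases u; cases v; auto simp: Cons_eq_append_conv append_eq_Cons_conv)

lemma nondeg_contra:
  fixes gs :: "nat \<Rightarrow> 'g::ab_group_add"
  assumes nd: "almost_nondegenerate n (elem_grading n gs :: 'g \<Rightarrow> 'a::comm_ring_1 mat set)"
    and nopath: "\<And>p k q. p<n \<Longrightarrow> k<n \<Longrightarrow> q<n \<Longrightarrow> gs k - gs p = g1 \<Longrightarrow> gs q - gs k = g2 \<Longrightarrow> False"
    and s0: "0 \<in> grading_supp n (elem_grading n gs :: 'g \<Rightarrow> 'a mat set)"
    and s1: "g1 \<in> grading_supp n (elem_grading n gs :: 'g \<Rightarrow> 'a mat set)"
    and s2: "g2 \<in> grading_supp n (elem_grading n gs :: 'g \<Rightarrow> 'a mat set)"
    and s3: "g1 + g2 \<in> grading_supp n (elem_grading n gs :: 'g \<Rightarrow> 'a mat set)"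
  shows False
proof -
  let ?S = "grading_supp n (elem_grading n gs :: 'g \<Rightarrow> 'a mat set)"
  let ?w = "[(0::nat, g1), (1, g2)]"
  have "mono_identity n (elem_grading n gs :: 'g \<Rightarrow> 'a mat set) ?w"
    unfolding mono_identity_def
  proof (intro allI impI)
    fix a :: "nat \<times> 'g \<Rightarrow> 'a mat"
    assume "\<forall>v\<in>set ?w. a v \<in> elem_grading n gs (snd v)"
    then have A: "a (0,g1) \<in> elem_grading n gs g1" and B: "a (1,g2) \<in> elem_grading n gs g2" by auto
    have CA: "a (0,g1) \<in> carrier_mat n n" and CB: "a (1,g2) \<in> carrier_mat n n"
      using A B unfolding elem_grading_def by auto
    have "a (0,g1) * a (1,g2) = 0\<^sub>m n n"
    proof (rule eq_matI)
      fix i j assume "i < dim_row (0\<^sub>m n n :: 'a mat)" "j < dim_col (0\<^sub>m n n :: 'a mat)"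
      then have ij: "i < n" "j < n" by auto
      have "\<And>k. k < n \<Longrightarrow> a (0,g1) $$ (i,k) * a (1,g2) $$ (k,j) = 0"
      proof (rule ccontr)
        fix k assume k: "k < n" "a (0,g1) $$ (i,k) * a (1,g2) $$ (k,j) \<noteq> 0"
        then have "a (0,g1) $$ (i,k) \<noteq> 0" "a (1,g2) $$ (k,j) \<noteq> 0" by auto
        then have "gs k - gs i = g1" "gs j - gs k = g2" using A B ij k unfolding elem_grading_def by auto
        then show False using nopath ij k by blast
      qed
      then show "(a (0,g1) * a (1,g2)) $$ (i,j) = (0\<^sub>m n n :: 'a mat) $$ (i,j)"
        using ij by (subst mult_entry[OF CA CB]) auto
    qed (use CA CB in auto)
    then show "foldr (*) (map a ?w) (1\<^sub>m n) = 0\<^sub>m n n" using CB by simp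
  qed
  moreover have "distinct ?w" by simp
  ultimately have "trivial_monomial n (elem_grading n gs :: 'g \<Rightarrow> 'a mat set) ?w"
    using nd unfolding almost_nondegenerate_def by blast
  then have mem: "(pmono ?w :: ('g,'a) fpoly) \<in> TG_ideal {pmono [v] | v. snd v \<notin> ?S}"
    unfolding trivial_monomial_def by blast
  have "(pmono ?w :: ('g,'a) fpoly) ?w \<noteq> 0" unfolding pmono_def by simp
  from TG_bad[OF mem this] obtain u v z where "?w = u @ v @ z" "wdeg v \<notin> ?S" unfolding badw_def by blast
  moreover have "v = [] \<or> v = [(0, g1)] \<or> v = [(1, g2)] \<or> v = ?w" using split2 calculation(1) by metis
  ultimately show False using s0 s1 s2 s3 by (auto simp: wdeg_def)
qed

lemma lt3: "(p::nat) < 3 \<Longrightarrow> p = 0 \<or> p = 1 \<or> p = 2" by auto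

lemma t1:
  fixes f :: "nat \<Rightarrow> 'g::linordered_ab_group_add"
  assumes "0 < d" "f 0 = a" "f 1 = a + d" "f 2 = a + d + d"
    and "p<3" "q<3" "p'<3" "q'<3"
  shows "(f q - f p = f q' - f p') = (int q - int p = int q' - int p')"
proof -
  have dd: "0 < d + d" "0 < d + (d + d)" "- d < 0" using assms(1) by (simp_all add: add_pos_pos)
  then have ne: "d + d \<noteq> - d" "d + (d + d) \<noteq> - d" "- d \<noteq> d + d" "- d \<noteq> d + (d + d)"
    by (metis less_asym)+
  from lt3[OF assms(5)] lt3[OF assms(6)] lt3[OF assms(7)] lt3[OF assms(8)] show ?thesis
    apply (elim disjE) 
    using assms(1-4) ne by (simp_all add: algebra_simps)
qed

lemma t2:
  fixes f :: "nat \<Rightarrow> 'g::linordered_ab_group_add"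
  assumes "0 < d" "0 < e" "d \<noteq> e" "f 0 = a" "f 1 = a + d" "f 2 = a + d + e"
    and "p<3" "k<3" "q<3" "f k - f p = e" "f q - f k = d"
  shows False
proof -
  have dd: "0 < e + e" "0 < d + e" "- d < 0" "- e < 0" using assms(1,2) by (simp_all add: add_pos_pos)
  then have ne: "- d \<noteq> e" "- d \<noteq> e + e" "- d \<noteq> d + e" "- e \<noteq> d"
    using assms(1,2) by (metis less_asym)+
  show False using lt3[OF assms(7)] lt3[OF assms(8)] lt3[OF assms(9)] 
    apply (elim disjE) 
  using assms ne by (simp_all add: algebra_simps)
qed

lemma t0:
  fixes f :: "nat \<Rightarrow> 'g::linordered_ab_group_add"
  assumes "0 < d" "f 0 = a" "f 1 = a + d"
    and "p<2" "q<2" "p'<2" "q'<2"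
  shows "(f q - f p = f q' - f p') = (int q - int p = int q' - int p')"
proof -
  have lt2: "\<And>p::nat. p < 2 \<Longrightarrow> p = 0 \<or> p = 1" by auto
  have "- d < 0" using assms(1) by simp
  then have ne: "d \<noteq> - d" "- d \<noteq> d" using assms(1) by (metis less_asym)+
  from lt2[OF assms(4)] lt2[OF assms(5)] lt2[OF assms(6)] lt2[OF assms(7)] show ?thesis
    apply (elim disjE)
    using assms(1-3) ne by (simp_all add: algebra_simps)
qed

definition P3 :: "nat \<Rightarrow> nat \<Rightarrow> nat \<Rightarrow> nat \<Rightarrow> nat" where
  "P3 x y z i = (if i = 0 then x else if i = 1 then y else z)"

lemma P3_simps[simp]: "P3 x y z 0 = x" "P3 x y z 1 = y" "P3 x y z 2 = z" "P3 x y z (Suc 0) = y"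
  unfolding P3_def by auto

lemma perm3:
  assumes "x < 3" "y < 3" "z < 3" "x \<noteq> y" "x \<noteq> z" "y \<noteq> z"
  shows "bij_betw (P3 x y z) {..<3} {..<3}"
proof -
  have "inj_on (P3 x y z) {..<3}"
    unfolding inj_on_def P3_def using assms by auto
  moreover have "P3 x y z ` {..<3} = {..<3}"
  proof
    show "P3 x y z ` {..<3} \<subseteq> {..<3}" using assms unfolding P3_def by auto
    have "{..<3::nat} = {0,1,2}" by auto
    moreover have "{0,1,2} \<subseteq> {x,y,z}" using assms by auto
    moreover have "{x,y,z} \<subseteq> P3 x y z ` {..<3}"
    proof -
      have "(0::nat) \<in> {..<3}" "(1::nat) \<in> {..<3}" "(2::nat) \<in> {..<3}" by auto
      then show ?thesis using P3_simps[of x y z] by (metis empty_subsetI image_eqI insert_subset)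
    qed
    ultimately show "{..<3} \<subseteq> P3 x y z ` {..<3}" by blast
  qed
  ultimately show ?thesis unfolding bij_betw_def by blast
qed


lemma sorted3:
  fixes gs :: "nat \<Rightarrow> 'g::linordered_ab_group_add" and \<pi> :: "nat \<Rightarrow> nat"
  assumes bij: "bij_betw \<pi> {..<3} {..<3}"
    and o1: "gs (\<pi> 0) < gs (\<pi> 1)" and o2: "gs (\<pi> 1) < gs (\<pi> 2)"
    and nd: "almost_nondegenerate 3 (elem_grading 3 gs :: 'g \<Rightarrow> 'a::comm_ring_1 mat set)"
  shows "graded_equivalent 3 (elem_grading 3 gs :: 'g \<Rightarrow> 'a mat set) (elem_grading 3 (\<lambda>i. int i))"
proof -
  define a where "a = gs (\<pi> 0)"
  define d where "d = gs (\<pi> 1) - gs (\<pi> 0)"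
  define e where "e = gs (\<pi> 2) - gs (\<pi> 1)"
  have d: "0 < d" "0 < e" using o1 o2 unfolding d_def e_def by simp_all
  have f: "gs (\<pi> 0) = a" "gs (\<pi> 1) = a + d" "gs (\<pi> 2) = a + d + e"
    unfolding a_def d_def e_def by (simp_all add: algebra_simps)
  show ?thesis
  proof (cases "d = e")
    case True
    show ?thesis
    proof (rule equiv_crit[OF bij])
      fix p q p' q' :: nat assume "p < 3" "q < 3" "p' < 3" "q' < 3"
      then show "(gs (\<pi> q) - gs (\<pi> p) = gs (\<pi> q') - gs (\<pi> p')) = (int q - int p = int q' - int p')"
        using t1[of d "\<lambda>i. gs (\<pi> i)" a] d f True by simp
    qed
  next
    case False
    have pi: "\<And>i. i < 3 \<Longrightarrow> \<pi> i < 3" using bij bij_betwE by blast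
    have sur: "\<And>p. p < 3 \<Longrightarrow> \<exists>p'<3. p = \<pi> p'" using bij unfolding bij_betw_def by (metis imageE lessThan_iff)
    have S: "grading_supp 3 (elem_grading 3 gs :: 'g \<Rightarrow> 'a mat set) = {gs q - gs p | p q. p<3 \<and> q<3}"
      by (rule supp_elem)
    show ?thesis
    proof (rule FalseE, rule nondeg_contra[OF nd, of e d])
      fix p k q assume "p < 3" "k < 3" "q < 3" "gs k - gs p = e" "gs q - gs k = d"
      then obtain p' k' q' where "p' < 3" "k' < 3" "q' < 3" "p = \<pi> p'" "k = \<pi> k'" "q = \<pi> q'"
        using sur by metis
      then show False using t2[of d e "\<lambda>i. gs (\<pi> i)" a p' k' q'] d f False \<open>gs k - gs p = e\<close> \<open>gs q - gs k = d\<close>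
        by simp
    next
      show "0 \<in> grading_supp 3 (elem_grading 3 gs :: 'g \<Rightarrow> 'a mat set)"
        unfolding S by (rule CollectI, rule exI[of _ 0], rule exI[of _ 0]) simp
      show "e \<in> grading_supp 3 (elem_grading 3 gs :: 'g \<Rightarrow> 'a mat set)"
        unfolding S e_def using pi by fastforce
      show "d \<in> grading_supp 3 (elem_grading 3 gs :: 'g \<Rightarrow> 'a mat set)"
        unfolding S d_def using pi by fastforce
      have "e + d = gs (\<pi> 2) - gs (\<pi> 0)" unfolding e_def d_def by (simp add: algebra_simps)
      then show "e + d \<in> grading_supp 3 (elem_grading 3 gs :: 'g \<Rightarrow> 'a mat set)"
        unfolding S using pi by fastforce
    qed
  qed
qed

lemma sorted2:
  fixes gs :: "nat \<Rightarrow> 'g::linordered_ab_group_add" and \<pi> :: "nat \<Rightarrow> nat"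
  assumes bij: "bij_betw \<pi> {..<2} {..<2}"
    and o1: "gs (\<pi> 0) < gs (\<pi> 1)"
  shows "graded_equivalent 2 (elem_grading 2 gs :: 'g \<Rightarrow> 'a::comm_ring_1 mat set) (elem_grading 2 (\<lambda>i. int i))"
proof (rule equiv_crit[OF bij])
  fix p q p' q' :: nat assume "p < 2" "q < 2" "p' < 2" "q' < 2"
  then show "(gs (\<pi> q) - gs (\<pi> p) = gs (\<pi> q') - gs (\<pi> p')) = (int q - int p = int q' - int p')"
    using t0[of "gs (\<pi> 1) - gs (\<pi> 0)" "\<lambda>i. gs (\<pi> i)" "gs (\<pi> 0)"] o1 by simp
qed

theorem mainTheorem9:
  fixes gs :: "nat \<Rightarrow> 'g::linordered_ab_group_add" and n :: nat
  assumes "n \<le> 3"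
    and "almost_nondegenerate n (elem_grading n gs :: 'g \<Rightarrow> 'a::field_char_0 mat set)"
    and "\<forall>A\<in>(elem_grading n gs 0 :: 'a mat set). \<forall>B\<in>elem_grading n gs 0. A * B = B * A"
  shows "graded_equivalent n (elem_grading n gs :: 'g \<Rightarrow> 'a mat set) (elem_grading n (\<lambda>i. int i))"
proof -
  have D: "\<And>i j. i < n \<Longrightarrow> j < n \<Longrightarrow> i \<noteq> j \<Longrightarrow> gs i \<noteq> gs j"
    using distinct_from_comm[OF assms(3)] by blast
  have idb: "bij_betw id {..<n} {..<n}" by simp
  consider "n = 0" | "n = 1" | "n = 2" | "n = 3" using assms(1) by linarith
  then show ?thesis
  proof cases
    case 1
    show ?thesis by (rule equiv_crit[OF idb]) (use 1 in auto)
  next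
    case 2
    show ?thesis by (rule equiv_crit[OF idb]) (use 2 in auto)
  next
    case 3
    have ne: "gs 0 \<noteq> gs 1" using D 3 by simp
    show ?thesis
    proof (cases "gs 0 < gs 1")
      case True
      have "bij_betw (P3 0 1 2) {..<2} {..<2}"
      proof -
        have e: "{..<2::nat} = {0,1}" by auto
        show ?thesis unfolding e bij_betw_def by (auto simp: inj_on_def)
      qed
      then show ?thesis using sorted2[of "P3 0 1 2" gs] True 3 by simp
    next
      case False
      then have lt: "gs 1 < gs 0" using ne by auto
      have "bij_betw (P3 1 0 2) {..<2} {..<2}"
      proof -
        have e: "{..<2::nat} = {0,1}" by auto
        show ?thesis unfolding e bij_betw_def by (auto simp: inj_on_def)
      qed
      then show ?thesis using sorted2[of "P3 1 0 2" gs] lt 3 by simp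
    qed
  next
    case 4
    have ne: "gs 0 \<noteq> gs 1" "gs 0 \<noteq> gs 2" "gs 1 \<noteq> gs 2" using D 4 by auto
    have nd: "almost_nondegenerate 3 (elem_grading 3 gs :: 'g \<Rightarrow> 'a mat set)" using assms(2) 4 by simp
    have G: "\<And>x y z. x < 3 \<Longrightarrow> y < 3 \<Longrightarrow> z < 3 \<Longrightarrow> x \<noteq> y \<Longrightarrow> x \<noteq> z \<Longrightarrow> y \<noteq> z \<Longrightarrow>
       gs x < gs y \<Longrightarrow> gs y < gs z \<Longrightarrow> ?thesis"
      using sorted3[OF perm3 _ _ nd] 4 by simp
    have lt: "\<And>i j. i < 3 \<Longrightarrow> j < 3 \<Longrightarrow> i \<noteq> j \<Longrightarrow> \<not> gs i < gs j \<Longrightarrow> gs j < gs i"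
      using D 4 by (metis linorder_neqE)
    show ?thesis
    proof (cases "gs 0 < gs 1")
      case c1: True
      show ?thesis
      proof (cases "gs 1 < gs 2")
        case True then show ?thesis using c1 by (intro G[of 0 1 2]) auto
      next
        case c2: False
        then have "gs 2 < gs 1" using lt[of 1 2] by simp
        show ?thesis
        proof (cases "gs 0 < gs 2")
          case True then show ?thesis using \<open>gs 2 < gs 1\<close> by (intro G[of 0 2 1]) auto
        next
          case False then have "gs 2 < gs 0" using lt[of 0 2] by simp
          then show ?thesis using c1 by (intro G[of 2 0 1]) auto
        qed
      qed
    next
      case c1: False
      then have l10: "gs 1 < gs 0" using lt[of 0 1] by simp
      show ?thesis
      proof (cases "gs 0 < gs 2")
        case True then show ?thesis using l10 by (intro G[of 1 0 2]) auto
      next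
        case False then have l20: "gs 2 < gs 0" using lt[of 0 2] by simp
        show ?thesis
        proof (cases "gs 1 < gs 2")
          case True then show ?thesis using l20 by (intro G[of 1 2 0]) auto
        next
          case False then have "gs 2 < gs 1" using lt[of 1 2] by simp
          then show ?thesis using l10 by (intro G[of 2 1 0]) auto
        qed
      qed
    qed
  qed
qed

end
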